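(* Let $X$ be a topologically complete space and let $\mathcal A$ be a family of closed, locally finite, normal covers of $X$ satisfying conditions (I) and (II) below. Let $Y$ be a closed subset of $X$, and for $\alpha\in\mathcal A$ put $\alpha|Y=\{F\cap Y : F\in\alpha\}$ and $\mathcal A|Y=\{\alpha|Y:\alpha\in\mathcal A\}$. Then the family $\mathcal A|Y$ of covers of $Y$ satisfies conditions (I) and (II) with $X$ replaced by $Y$ (and open sets of $Y$ taken in the subspace topology), namely: (I$_Y$) for each open subset $U$ of $Y$ and each $x\in U$ there is $\alpha\in\mathcal A$ with $\bigcup\mathrm{star}_{\alpha|Y}(x)\subset U$; (II$_Y$) if for each $\alpha\in\mathcal A$ a member $f(\alpha)\in\alpha$ is chosen such that the collection $\{f(\alpha)\cap Y\}_{\alpha\in\mathcal A}$ has the finite intersection property, then $\bigcap_{\alpha\in\mathcal A}(f(\alpha)\cap Y)\neq\emptyset$.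
   Context: A topologically complete space is a Tychonoff space that is complete with respect to its finest uniformity. A cover $\alpha$ of $X$ is a closed, locally finite, normal cover if its members are closed, it is locally finite, and there is a partition of unity $\{\phi_{\alpha,V}:V\in\alpha\}$ subordinated to it: continuous $\phi_{\alpha,V}:X\to[0,1]$ with $\mathrm{cl}(\phi_{\alpha,V}^{-1}((0,1]))\subset\mathrm{int}(V)$ and $\sum_{V\in\alpha}\phi_{\alpha,V}=1$. For a cover $\alpha$ of a space and a subset $S$, $\mathrm{star}_\alpha(S)=\{V\in\alpha: V\cap S\neq\emptyset\}$, $\mathrm{star}_\alpha(x)=\mathrm{star}_\alpha(\{x\})$, and $\bigcup$ of a collection denotes the union of its members. Conditions on $\mathcal A$: (I) for each open $U\subset X$ and each $x\in U$ there exists $\alpha\in\mathcal A$ with $\bigcup\mathrm{star}_\alpha(x)\subset U$; (II) whenever a member $f(\alpha)\in\alpha$ is selected for each $\alpha\in\mathcal A$ and the collection $\{f(\alpha)\}$ has the finite intersection property, then $\bigcap_{\alpha\in\mathcal A}f(\alpha)\neq\emptyset$. *)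

theory Defs
  imports "HOL-Analysis.Analysis"
begin

definition tychonoff_space :: "'a topology \<Rightarrow> bool" where
  "tychonoff_space X \<longleftrightarrow> completely_regular_space X \<and> Hausdorff_space X"

text \<open>Continuous pseudometrics on X; for a Tychonoff space they generate the finest
  (fine) uniformity compatible with the topology.\<close>
definition continuous_pseudometric :: "'a topology \<Rightarrow> ('a \<Rightarrow> 'a \<Rightarrow> real) \<Rightarrow> bool" where
  "continuous_pseudometric X d \<longleftrightarrow>
     continuous_map (prod_topology X X) euclideanreal (\<lambda>(x, y). d x y) \<and>
     (\<forall>x\<in>topspace X. d x x = 0) \<and>
     (\<forall>x\<in>topspace X. \<forall>y\<in>topspace X. 0 \<le> d x y \<and> d x y = d y x) \<and>
     (\<forall>x\<in>topspace X. \<forall>y\<in>topspace X. \<forall>z\<in>topspace X. d x z \<le> d x y + d y z)"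

definition fine_cauchy_filter :: "'a topology \<Rightarrow> 'a filter \<Rightarrow> bool" where
  "fine_cauchy_filter X F \<longleftrightarrow>
     F \<noteq> bot \<and> eventually (\<lambda>x. x \<in> topspace X) F \<and>
     (\<forall>d e. continuous_pseudometric X d \<and> e > 0 \<longrightarrow>
        (\<exists>A. A \<subseteq> topspace X \<and> eventually (\<lambda>x. x \<in> A) F \<and>
             (\<forall>x\<in>A. \<forall>y\<in>A. d x y < e)))"

definition topologically_complete :: "'a topology \<Rightarrow> bool" where
  "topologically_complete X \<longleftrightarrow> tychonoff_space X \<and>
     (\<forall>F. fine_cauchy_filter X F \<longrightarrow> (\<exists>x. limitin X id x F))"

definition locally_finite_in :: "'a topology \<Rightarrow> 'a set set \<Rightarrow> bool" where
  "locally_finite_in X \<alpha> \<longleftrightarrow>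
     (\<forall>x\<in>topspace X. \<exists>W. openin X W \<and> x \<in> W \<and> finite {V\<in>\<alpha>. V \<inter> W \<noteq> {}})"

text \<open>Closed, locally finite, normal cover (with a subordinated partition of unity).\<close>
definition closed_lf_normal_cover :: "'a topology \<Rightarrow> 'a set set \<Rightarrow> bool" where
  "closed_lf_normal_cover X \<alpha> \<longleftrightarrow>
     (\<forall>V\<in>\<alpha>. closedin X V) \<and> \<Union>\<alpha> = topspace X \<and> locally_finite_in X \<alpha> \<and>
     (\<exists>\<phi> :: 'a set \<Rightarrow> 'a \<Rightarrow> real.
        (\<forall>V\<in>\<alpha>. continuous_map X euclideanreal (\<phi> V) \<and>
                 (\<forall>x\<in>topspace X. 0 \<le> \<phi> V x \<and> \<phi> V x \<le> 1) \<and>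
                 X closure_of {x\<in>topspace X. \<phi> V x > 0} \<subseteq> X interior_of V) \<and>
        (\<forall>x\<in>topspace X. finite {V\<in>\<alpha>. \<phi> V x \<noteq> 0} \<and>
                         (\<Sum>V\<in>{V\<in>\<alpha>. \<phi> V x \<noteq> 0}. \<phi> V x) = 1))"

definition star_of :: "'a set set \<Rightarrow> 'a set \<Rightarrow> 'a set set" where
  "star_of \<alpha> S = {V\<in>\<alpha>. V \<inter> S \<noteq> {}}"

definition finite_intersection_property :: "'a set set \<Rightarrow> bool" where
  "finite_intersection_property \<C> \<longleftrightarrow>
     (\<forall>\<F>. \<F> \<subseteq> \<C> \<and> finite \<F> \<and> \<F> \<noteq> {} \<longrightarrow> \<Inter>\<F> \<noteq> {})"

definition restrict_cover :: "'a set set \<Rightarrow> 'a set \<Rightarrow> 'a set set" where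
  "restrict_cover \<alpha> Y = (\<lambda>F. F \<inter> Y) ` \<alpha>"

definition condition_I :: "'a topology \<Rightarrow> 'a set set set \<Rightarrow> bool" where
  "condition_I X \<A> \<longleftrightarrow>
     (\<forall>U x. openin X U \<and> x \<in> U \<longrightarrow> (\<exists>\<alpha>\<in>\<A>. \<Union>(star_of \<alpha> {x}) \<subseteq> U))"

definition condition_II :: "'a set set set \<Rightarrow> bool" where
  "condition_II \<A> \<longleftrightarrow>
     (\<forall>f. (\<forall>\<alpha>\<in>\<A>. f \<alpha> \<in> \<alpha>) \<and> finite_intersection_property (f ` \<A>)
          \<longrightarrow> (\<Inter>\<alpha>\<in>\<A>. f \<alpha>) \<noteq> {})"

end

theory Submission
  imports Defs
begin

lemma fipD: "finite_intersection_property C \<Longrightarrow> F \<subseteq> C \<Longrightarrow> finite F \<Longrightarrow> F \<noteq> {} \<Longrightarrow> \<Inter>F \<noteq> {}"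
  by (simp add: finite_intersection_property_def)

theorem proposition2p1:
  fixes X :: "'a topology" and \<A> :: "'a set set set" and Y :: "'a set"
  assumes "topologically_complete X"
    and "\<forall>\<alpha>\<in>\<A>. closed_lf_normal_cover X \<alpha>"
    and "condition_I X \<A>"
    and "condition_II \<A>"
    and "closedin X Y"
  shows "(\<forall>U x. openin (subtopology X Y) U \<and> x \<in> U \<longrightarrow>
             (\<exists>\<alpha>\<in>\<A>. \<Union>(star_of (restrict_cover \<alpha> Y) {x}) \<subseteq> U))
       \<and> (\<forall>f. (\<forall>\<alpha>\<in>\<A>. f \<alpha> \<in> \<alpha>) \<and>
               finite_intersection_property ((\<lambda>\<alpha>. f \<alpha> \<inter> Y) ` \<A>)
             \<longrightarrow> (\<Inter>\<alpha>\<in>\<A>. f \<alpha> \<inter> Y) \<noteq> {})"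
proof (intro conjI allI impI)
  fix U x assume h: "openin (subtopology X Y) U \<and> x \<in> U"
  then obtain V where V: "openin X V" "U = V \<inter> Y" by (auto simp: openin_subtopology)
  with h have "x \<in> V" by auto
  with V assms(3) obtain \<alpha> where a: "\<alpha> \<in> \<A>" "\<Union>(star_of \<alpha> {x}) \<subseteq> V"
    unfolding condition_I_def by blast
  have "\<Union>(star_of (restrict_cover \<alpha> Y) {x}) \<subseteq> U"
  proof
    fix z assume "z \<in> \<Union>(star_of (restrict_cover \<alpha> Y) {x})"
    then obtain F where F: "F \<in> \<alpha>" "z \<in> F \<inter> Y" "x \<in> F \<inter> Y"
      by (auto simp: star_of_def restrict_cover_def)
    then have "F \<in> star_of \<alpha> {x}" by (auto simp: star_of_def)
    with a F V show "z \<in> U" by blast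
  qed
  with a show "\<exists>\<alpha>\<in>\<A>. \<Union>(star_of (restrict_cover \<alpha> Y) {x}) \<subseteq> U" by blast
next
  fix f assume h: "(\<forall>\<alpha>\<in>\<A>. f \<alpha> \<in> \<alpha>) \<and> finite_intersection_property ((\<lambda>\<alpha>. f \<alpha> \<inter> Y) ` \<A>)"
  show "(\<Inter>\<alpha>\<in>\<A>. f \<alpha> \<inter> Y) \<noteq> {}"
  proof (cases "\<A> = {}")
    case True then show ?thesis by simp
  next
    case False
    then obtain \<beta> where \<beta>: "\<beta> \<in> \<A>" by blast
    have fip: "finite_intersection_property (f ` \<A>)"
      unfolding finite_intersection_property_def
    proof (intro allI impI)
      fix \<F> assume F: "\<F> \<subseteq> f ` \<A> \<and> finite \<F> \<and> \<F> \<noteq> {}"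
      then obtain B where B: "B \<subseteq> \<A>" "finite B" "\<F> = f ` B"
        by (meson finite_subset_image)
      with F have "B \<noteq> {}" by auto
      have "\<Inter>((\<lambda>\<alpha>. f \<alpha> \<inter> Y) ` B) \<noteq> {}"
        apply (rule fipD[OF conjunct2[OF h]])
        using B \<open>B \<noteq> {}\<close> by auto
      moreover have "\<Inter>((\<lambda>\<alpha>. f \<alpha> \<inter> Y) ` B) \<subseteq> \<Inter>\<F>" using B(3) by auto
      ultimately show "\<Inter>\<F> \<noteq> {}" by auto
    qed
    have "(\<Inter>\<alpha>\<in>\<A>. f \<alpha>) \<noteq> {}"
      using assms(4) unfolding condition_II_def
      apply (elim allE[where x=f])
      using h fip by simp
    then obtain p where p: "p \<in> (\<Inter>\<alpha>\<in>\<A>. f \<alpha>)" by blast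
    have "p \<in> Y"
    proof (rule ccontr)
      assume "p \<notin> Y"
      have "p \<in> topspace X"
      proof -
        have "\<Union>\<beta> = topspace X" using \<beta> assms(2) unfolding closed_lf_normal_cover_def by simp
        moreover have "p \<in> f \<beta>" "f \<beta> \<in> \<beta>" using p \<beta> h by auto
        ultimately show ?thesis by blast
      qed
      moreover have "openin X (topspace X - Y)" using assms(5) by blast
      ultimately obtain \<alpha> where a: "\<alpha> \<in> \<A>" "\<Union>(star_of \<alpha> {p}) \<subseteq> topspace X - Y"
        using assms(3) \<open>p \<notin> Y\<close> unfolding condition_I_def
        apply (elim allE[where x="topspace X - Y"] allE[where x=p])
        by auto
      have "f \<alpha> \<in> star_of \<alpha> {p}" using a p h by (auto simp: star_of_def)
      with a have "f \<alpha> \<inter> Y = {}" by blast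
      moreover have "\<Inter>{f \<alpha> \<inter> Y} \<noteq> {}" using h a
        by (intro fipD[OF conjunct2[OF h]]) auto
      ultimately show False by simp
    qed
    with p show ?thesis by blast
  qed
qed

end
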